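(* Let $s,s'\in H_A$ and $k>0$. Let $\bar s,\bar{s'}$ denote the forests obtained from $s$ and $s'$ by removing all nodes at depth $k$ or more. Then $s\sim_k s'$ if and only if $\bar s$ and $\bar{s'}$ are idempotent-and-commutative equivalent.
   Context: $H_A$ is the set of forests over the finite alphabet $A$ (finite ordered sequences of finite ordered $A$-labelled trees), with concatenation $+$; root nodes have depth $0$; $as$ is the tree with root $a$ and child forest $s$. Equivalences $\sim_k$: $\sim_0$ identifies all forests; for $s=a_1s_1+\cdots+a_rs_r$, $s\sim_{k+1}s'$ iff $\{(a_i,[s_i]_{\sim_k}):1\le i\le r\}$ equals the corresponding set for $s'$. Two forests are idempotent-and-commutative equivalent if one can be transformed into the other by finitely many operations: (i) $p(t_1+t_2)\to p(t_2+t_1)$ for a context $p$ and trees $t_1,t_2$; (ii) $pt\to p(t+t)$ for a tree $t$; (iii) $p(t+t)\to pt$ (a context is a forest with one leaf replaced by a hole, $pt$ the result of substituting $t$ into the hole). *)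

theory Defs
  imports Main
begin

text \<open>Finite ordered A-labelled trees; a forest is a list of trees,
  concatenation of forests is list append.\<close>
datatype 'a tree = Node 'a "'a tree list"

type_synonym 'a forest = "'a tree list"

text \<open>The equivalences sim_k. The class of a forest is represented by the set of
  forests equivalent to it.\<close>
primrec simk :: "nat \<Rightarrow> 'a forest \<Rightarrow> 'a forest \<Rightarrow> bool" where
  "simk 0 s s' = True"
| "simk (Suc k) s s' =
     ((\<lambda>t. case t of Node a c \<Rightarrow> (a, {u. simk k c u})) ` set s =
      (\<lambda>t. case t of Node a c \<Rightarrow> (a, {u. simk k c u})) ` set s')"

text \<open>Remove all nodes at depth k or more (roots have depth 0).\<close>
primrec trunc :: "nat \<Rightarrow> 'a forest \<Rightarrow> 'a forest" where
  "trunc 0 s = []"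
| "trunc (Suc k) s = map (\<lambda>t. case t of Node a c \<Rightarrow> Node a (trunc k c)) s"

text \<open>One step p(t1+t2) -> p(t2+t1), p t -> p(t+t), p(t+t) -> p t, where p ranges
  over contexts: the hole sits at an arbitrary position of an arbitrary sibling list.\<close>
inductive ic_step :: "'a forest \<Rightarrow> 'a forest \<Rightarrow> bool" where
  swap: "ic_step (xs @ [t1, t2] @ ys) (xs @ [t2, t1] @ ys)"
| dup: "ic_step (xs @ [t] @ ys) (xs @ [t, t] @ ys)"
| merge: "ic_step (xs @ [t, t] @ ys) (xs @ [t] @ ys)"
| deep: "ic_step c c' \<Longrightarrow> ic_step (xs @ [Node a c] @ ys) (xs @ [Node a c'] @ ys)"

definition ic_equiv :: "'a forest \<Rightarrow> 'a forest \<Rightarrow> bool" where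
  "ic_equiv s s' \<longleftrightarrow> ic_step\<^sup>*\<^sup>* s s'"

end

theory Submission
  imports Defs
begin

lemma simk_refl: "simk k s s"
  by (cases k) auto

lemma simk_cls: "simk k x y \<Longrightarrow> simk k x u = simk k y u"
  by (cases k) auto

lemma simk_sym: "simk k x y \<Longrightarrow> simk k y x"
  by (cases k) auto

lemma simk_trans: "simk k x y \<Longrightarrow> simk k y z \<Longrightarrow> simk k x z"
  by (cases k) auto

lemma simk_trunc: "simk k s (trunc k s)"
proof (induction k arbitrary: s)
  case 0 then show ?case by simp
next
  case (Suc k)
  have eq: "{u. simk k c u} = {u. simk k (trunc k c) u}" for c :: "'a forest"
    using simk_cls[OF Suc.IH[of c]] by simp
  let ?F = "\<lambda>t. case t of Node a c \<Rightarrow> (a, {u. simk k c u})"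
  let ?G = "\<lambda>t. case t of Node a c \<Rightarrow> Node a (trunc k c)"
  have fg: "?F (?G t) = ?F t" for t :: "'a tree"
  proof (cases t)
    case (Node a c) then show ?thesis using eq[of c] by simp
  qed
  have "?F ` set (map ?G s) = ?F ` set s"
    unfolding set_map image_image fg by (rule refl)
  then show ?case by simp
qed

lemma step_simk: "ic_step t t' \<Longrightarrow> simk k t t'"
proof (induction arbitrary: k rule: ic_step.induct)
  case (swap xs t1 t2 ys) then show ?case by (cases k) auto
next
  case (dup xs t ys) then show ?case by (cases k) auto
next
  case (merge xs t ys) then show ?case by (cases k) auto
next
  case (deep c c' xs a ys)
  show ?case
  proof (cases k)
    case 0 then show ?thesis by simp
  next
    case (Suc j)
    have "{u. simk j c u} = {u. simk j c' u}" using simk_cls[OF deep.IH] by simp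
    then show ?thesis using Suc by simp
  qed
qed

lemma equiv_simk: "ic_equiv t t' \<Longrightarrow> simk k t t'"
  unfolding ic_equiv_def
  by (induction rule: rtranclp_induct) (auto intro: simk_refl simk_trans step_simk)

lemma step_sym: "ic_step t t' \<Longrightarrow> ic_step t' t"
proof (induction rule: ic_step.induct)
  case (swap xs t1 t2 ys) show ?case using ic_step.swap[of xs t2 t1 ys] by simp
next
  case (dup xs t ys) show ?case using ic_step.merge[of xs t ys] by simp
next
  case (merge xs t ys) show ?case using ic_step.dup[of xs t ys] by simp
next
  case (deep c c' xs a ys) show ?case using ic_step.deep[OF deep.IH, of xs a ys] by simp
qed

lemma equiv_refl: "ic_equiv s s" unfolding ic_equiv_def by simp

lemma equiv_trans: "ic_equiv x y \<Longrightarrow> ic_equiv y z \<Longrightarrow> ic_equiv x z"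
  unfolding ic_equiv_def by simp

lemma equiv_sym: "ic_equiv x y \<Longrightarrow> ic_equiv y x"
  unfolding ic_equiv_def
  by (induction rule: rtranclp_induct) (auto intro: step_sym converse_rtranclp_into_rtranclp)

lemma step_app: "ic_step s s' \<Longrightarrow> ic_step (xs@s@ys) (xs@s'@ys)"
proof (induction rule: ic_step.induct)
  case (swap xs0 t1 t2 ys0)
  then show ?case using ic_step.swap[of "xs@xs0" t1 t2 "ys0@ys"] by simp
next
  case (dup xs0 t ys0)
  then show ?case using ic_step.dup[of "xs@xs0" t "ys0@ys"] by simp
next
  case (merge xs0 t ys0)
  then show ?case using ic_step.merge[of "xs@xs0" t "ys0@ys"] by simp
next
  case (deep c c' xs0 a ys0)
  then show ?case using ic_step.deep[of c c' "xs@xs0" a "ys0@ys"] by simp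
qed

lemma equiv_app: "ic_equiv s s' \<Longrightarrow> ic_equiv (xs@s@ys) (xs@s'@ys)"
  unfolding ic_equiv_def
  by (induction rule: rtranclp_induct) (auto intro: step_app rtranclp.rtrancl_into_rtrancl)

lemma equiv_node: "ic_equiv c c' \<Longrightarrow> ic_equiv [Node a c] [Node a c']"
  unfolding ic_equiv_def
proof (induction rule: rtranclp_induct)
  case base then show ?case by simp
next
  case (step y z)
  then show ?case using ic_step.deep[of y z "[]" a "[]"]
    by (auto intro: rtranclp.rtrancl_into_rtrancl)
qed

lemma comm1: "ic_equiv ([x]@ys) (ys@[x])"
proof (induction ys)
  case Nil then show ?case by (simp add: equiv_refl)
next
  case (Cons y ys)
  have "ic_equiv (x#y#ys) (y#x#ys)"
    unfolding ic_equiv_def using ic_step.swap[of "[]" x y ys] by auto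
  moreover have "ic_equiv ([y]@([x]@ys)@[]) ([y]@(ys@[x])@[])"
    using equiv_app[OF Cons.IH] by blast
  ultimately show ?case by (auto intro: equiv_trans)
qed

lemma add_elem: "x \<in> set L \<Longrightarrow> ic_equiv L (L@[x])"
proof -
  assume "x \<in> set L"
  then obtain xs ys where L: "L = xs@[x]@ys" by (metis append_Cons append_Nil split_list)
  have "ic_equiv (xs@[x]@ys) (xs@[x,x]@ys)"
    unfolding ic_equiv_def using ic_step.dup[of xs x ys] by auto
  moreover have "ic_equiv ((xs@[x])@([x]@ys)@[]) ((xs@[x])@(ys@[x])@[])"
    using equiv_app[OF comm1] by blast
  ultimately show ?thesis unfolding L by (auto intro: equiv_trans)
qed

definition teq :: "'a tree \<Rightarrow> 'a tree \<Rightarrow> bool" where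
  "teq x y \<longleftrightarrow> (\<exists>a c c'. x = Node a c \<and> y = Node a c' \<and> ic_equiv c c')"

lemma add_teq: "x \<in> set L \<Longrightarrow> teq x y \<Longrightarrow> ic_equiv L (L@[y])"
proof -
  assume x: "x \<in> set L" and t: "teq x y"
  then obtain a c c' where xy: "x = Node a c" "y = Node a c'" "ic_equiv c c'"
    unfolding teq_def by blast
  have "ic_equiv (L@[x]@[]) (L@[y]@[])"
    using equiv_app[OF equiv_node[OF xy(3)]] xy by blast
  then show ?thesis using add_elem[OF x] by (auto intro: equiv_trans)
qed

lemma add_list: "\<forall>y\<in>set M. \<exists>x\<in>set L. teq x y \<Longrightarrow> ic_equiv L (L@M)"
proof (induction M arbitrary: L)
  case Nil then show ?case by (simp add: equiv_refl)
next
  case (Cons y M)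
  then obtain x where "x \<in> set L" "teq x y" by auto
  then have 1: "ic_equiv L (L@[y])" by (rule add_teq)
  have "\<forall>z\<in>set M. \<exists>x\<in>set (L@[y]). teq x z" using Cons.prems by auto
  then have "ic_equiv (L@[y]) ((L@[y])@M)" by (rule Cons.IH)
  then show ?case using 1 by (auto intro: equiv_trans)
qed

lemma comm: "ic_equiv (as@bs) (bs@as)"
proof (induction as)
  case Nil then show ?case by (simp add: equiv_refl)
next
  case (Cons a as)
  have h1: "ic_equiv ([a]@(as@bs)@[]) ([a]@(bs@as)@[])" by (rule equiv_app[OF Cons.IH])
  have h2: "ic_equiv ([a]@(bs@as)) ((bs@as)@[a])" by (rule comm1)
  have h3: "ic_equiv (bs@([a]@as)@[]) (bs@(as@[a])@[])" by (rule equiv_app[OF comm1])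
  have "ic_equiv ((a#as)@bs) ((bs@as)@[a])" using equiv_trans[OF h1[simplified] h2[simplified]] by simp
  moreover have "ic_equiv ((bs@as)@[a]) (bs@(a#as))" using equiv_sym[OF h3] by simp
  ultimately show ?case by (rule equiv_trans)
qed

lemma list_equiv:
  assumes "\<forall>y\<in>set M. \<exists>x\<in>set L. teq x y" "\<forall>x\<in>set L. \<exists>y\<in>set M. teq y x"
  shows "ic_equiv L M"
proof -
  have "ic_equiv L (L@M)" using add_list assms(1) by blast
  moreover have "ic_equiv M (M@L)" using add_list assms(2) by blast
  ultimately show ?thesis using comm[of L M] by (auto intro: equiv_trans equiv_sym)
qed

lemma simk_equiv: "simk k s s' \<Longrightarrow> ic_equiv (trunc k s) (trunc k s')"
proof (induction k arbitrary: s s')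
  case 0 then show ?case by (simp add: equiv_refl)
next
  case (Suc k)
  let ?f = "\<lambda>t. case t of Node a c \<Rightarrow> (a, {u. simk k c u})"
  have img: "?f ` set s = ?f ` set s'" using Suc.prems by simp
  have A: "\<exists>y\<in>set (trunc (Suc k) s'). teq x y" if xin: "x \<in> set (trunc (Suc k) s)"
    and img: "?f ` set s = ?f ` set s'" for x and s s' :: "'a forest"
  proof -
    obtain a c where ac: "Node a c \<in> set s" "x = Node a (trunc k c)"
    proof -
      from xin obtain t where "t \<in> set s" "x = (case t of Node a c \<Rightarrow> Node a (trunc k c))"
        by auto
      moreover obtain a0 c0 where "t = Node a0 c0" by (cases t)
      ultimately show ?thesis using that[of a0 c0] by simp
    qed
    have "?f (Node a c) \<in> ?f ` set s'" using ac img by blast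
    then obtain t where t: "t \<in> set s'" "?f t = (a, {u. simk k c u})" by auto
    obtain b c' where bc: "t = Node b c'" by (cases t)
    with t have "b = a" "{u. simk k c' u} = {u. simk k c u}" by auto
    then have "simk k c c'" using simk_refl[of k c'] by auto
    then have "ic_equiv (trunc k c) (trunc k c')" by (rule Suc.IH)
    then have "teq x (Node a (trunc k c'))" using ac unfolding teq_def by blast
    moreover have "Node a (trunc k c') \<in> set (trunc (Suc k) s')"
      using t bc \<open>b = a\<close> by force
    ultimately show ?thesis by blast
  qed
  have teq_sym: "teq x y \<Longrightarrow> teq y x" for x y :: "'a tree"
    unfolding teq_def using equiv_sym by blast
  show ?case
  proof (rule list_equiv)
    show "\<forall>y\<in>set (trunc (Suc k) s'). \<exists>x\<in>set (trunc (Suc k) s). teq x y"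
    proof
      fix y assume "y \<in> set (trunc (Suc k) s')"
      from A[OF this img[symmetric]] obtain x where "x \<in> set (trunc (Suc k) s)" "teq y x" by blast
      then show "\<exists>x\<in>set (trunc (Suc k) s). teq x y" using teq_sym by blast
    qed
    show "\<forall>x\<in>set (trunc (Suc k) s). \<exists>y\<in>set (trunc (Suc k) s'). teq y x"
    proof
      fix x assume "x \<in> set (trunc (Suc k) s)"
      from A[OF this img] obtain y where "y \<in> set (trunc (Suc k) s')" "teq x y" by blast
      then show "\<exists>y\<in>set (trunc (Suc k) s'). teq y x" using teq_sym by blast
    qed
  qed
qed

theorem lemma5:
  fixes s s' :: "('a::finite) forest" and k :: nat
  assumes "k > 0"
  shows "simk k s s' \<longleftrightarrow> ic_equiv (trunc k s) (trunc k s')"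
proof
  assume "simk k s s'" then show "ic_equiv (trunc k s) (trunc k s')" by (rule simk_equiv)
next
  assume "ic_equiv (trunc k s) (trunc k s')"
  then have "simk k (trunc k s) (trunc k s')" by (rule equiv_simk)
  then show "simk k s s'"
    using simk_trunc[of k s] simk_trunc[of k s'] by (meson simk_sym simk_trans)
qed

end
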